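(* Let $\varepsilon\in\{0,\tfrac12\}$ and let $f$ be a biderivation of $\mathcal{SV}(\varepsilon)$. Then there exist linear maps $\phi,\psi:\mathcal{SV}(\varepsilon)\to\mathcal{SV}(\varepsilon)$ and linear complex-valued functions $\rho_1,\rho_2,\rho_3,\theta_1,\theta_2,\theta_3$ on $\mathcal{SV}(\varepsilon)$ such that for all $x,y\in\mathcal{SV}(\varepsilon)$, $$f(x,y)=\rho_1(x)D_1(y)+\rho_2(x)D_2(y)+\rho_3(x)D_3(y)+[\phi(x),y]=\theta_1(y)D_1(x)+\theta_2(y)D_2(x)+\theta_3(y)D_3(x)+[x,\psi(y)].$$
   Context: For $\varepsilon\in\{0,\frac12\}$, $\mathcal{SV}(\varepsilon)$ is the complex Lie algebra with basis $\{L_i,Y_j,M_i\mid i\in\mathbb{Z},\ j\in\varepsilon+\mathbb{Z}\}$ and brackets $[L_m,L_n]=(m-n)L_{m+n}$, $[L_m,Y_n]=(\frac12 m-n)Y_{m+n}$, $[L_m,M_n]=-nM_{m+n}$, $[Y_m,Y_n]=(m-n)M_{m+n}$, $[Y_m,M_n]=[M_m,M_n]=0$. A biderivation of a Lie algebra $L$ is a bilinear map $f:L\times L\to L$ with $f([x,y],z)=[x,f(y,z)]+[f(x,z),y]$ and $f(x,[y,z])=[f(x,y),z]+[y,f(x,z)]$ for all $x,y,z\in L$. The linear maps $D_1,D_2,D_3$ on $\mathcal{SV}(\varepsilon)$ are defined by $D_1(L_m)=M_m$, $D_1(Y_j)=D_1(M_m)=0$; $D_2(L_m)=mM_m$, $D_2(Y_j)=D_2(M_m)=0$;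 $D_3(L_m)=0$, $D_3(Y_j)=Y_j$, $D_3(M_m)=2M_m$ (for all $m\in\mathbb{Z}$, $j\in\varepsilon+\mathbb{Z}$). *)

theory Defs
  imports Complex_Main "HOL-Library.Function_Algebras"
begin

text \<open>Basis of SV(eps): L m (m integer), Y k standing for Y_(k+eps) (k integer),
  M m (m integer).  Elements are finitely supported coefficient functions.\<close>

datatype sv_idx = L int | Y int | M int

type_synonym sv_vec = "sv_idx \<Rightarrow> complex"

definition supp :: "sv_vec \<Rightarrow> sv_idx set" where
  "supp v = {i. v i \<noteq> 0}"

definition SV :: "sv_vec set" where
  "SV = {v. finite (supp v)}"

definition bvec :: "sv_idx \<Rightarrow> sv_vec" where
  "bvec i = (\<lambda>k. if k = i then 1 else 0)"

definition smult :: "complex \<Rightarrow> sv_vec \<Rightarrow> sv_vec" where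
  "smult c v = (\<lambda>k. c * v k)"

definition two_eps :: "real \<Rightarrow> int" where
  "two_eps eps = \<lfloor>2 * eps\<rfloor>"

fun bb :: "real \<Rightarrow> sv_idx \<Rightarrow> sv_idx \<Rightarrow> sv_vec" where
  "bb eps (L m) (L n) = smult (of_int (m - n)) (bvec (L (m + n)))"
| "bb eps (L m) (Y n) = smult (of_int m / 2 - (of_int n + complex_of_real eps)) (bvec (Y (m + n)))"
| "bb eps (L m) (M n) = smult (- of_int n) (bvec (M (m + n)))"
| "bb eps (Y m) (L n) = smult (- (of_int n / 2 - (of_int m + complex_of_real eps))) (bvec (Y (m + n)))"
| "bb eps (M m) (L n) = smult (of_int m) (bvec (M (m + n)))"
| "bb eps (Y m) (Y n) = smult (of_int (m - n)) (bvec (M (m + n + two_eps eps)))"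
| "bb eps (Y m) (M n) = (\<lambda>k. 0)"
| "bb eps (M m) (Y n) = (\<lambda>k. 0)"
| "bb eps (M m) (M n) = (\<lambda>k. 0)"

definition br :: "real \<Rightarrow> sv_vec \<Rightarrow> sv_vec \<Rightarrow> sv_vec" where
  "br eps u v = (\<Sum>i\<in>supp u. \<Sum>j\<in>supp v. smult (u i * v j) (bb eps i j))"

definition lin_ext :: "(sv_idx \<Rightarrow> sv_vec) \<Rightarrow> sv_vec \<Rightarrow> sv_vec" where
  "lin_ext g u = (\<Sum>i\<in>supp u. smult (u i) (g i))"

fun D1b :: "sv_idx \<Rightarrow> sv_vec" where
  "D1b (L m) = bvec (M m)"
| "D1b (Y j) = (\<lambda>k. 0)"
| "D1b (M m) = (\<lambda>k. 0)"

fun D2b :: "sv_idx \<Rightarrow> sv_vec" where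
  "D2b (L m) = smult (of_int m) (bvec (M m))"
| "D2b (Y j) = (\<lambda>k. 0)"
| "D2b (M m) = (\<lambda>k. 0)"

fun D3b :: "sv_idx \<Rightarrow> sv_vec" where
  "D3b (L m) = (\<lambda>k. 0)"
| "D3b (Y j) = bvec (Y j)"
| "D3b (M m) = smult 2 (bvec (M m))"

definition D1 :: "sv_vec \<Rightarrow> sv_vec" where "D1 = lin_ext D1b"
definition D2 :: "sv_vec \<Rightarrow> sv_vec" where "D2 = lin_ext D2b"
definition D3 :: "sv_vec \<Rightarrow> sv_vec" where "D3 = lin_ext D3b"

definition lin_map :: "(sv_vec \<Rightarrow> sv_vec) \<Rightarrow> bool" where
  "lin_map h \<longleftrightarrow> (\<forall>u\<in>SV. h u \<in> SV) \<and>
     (\<forall>u\<in>SV. \<forall>v\<in>SV. h (u + v) = h u + h v) \<and>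
     (\<forall>c. \<forall>u\<in>SV. h (smult c u) = smult c (h u))"

definition lin_fun :: "(sv_vec \<Rightarrow> complex) \<Rightarrow> bool" where
  "lin_fun h \<longleftrightarrow>
     (\<forall>u\<in>SV. \<forall>v\<in>SV. h (u + v) = h u + h v) \<and>
     (\<forall>c. \<forall>u\<in>SV. h (smult c u) = c * h u)"

definition biderivation :: "real \<Rightarrow> (sv_vec \<Rightarrow> sv_vec \<Rightarrow> sv_vec) \<Rightarrow> bool" where
  "biderivation eps f \<longleftrightarrow>
     (\<forall>x\<in>SV. \<forall>y\<in>SV. f x y \<in> SV) \<and>
     (\<forall>z\<in>SV. lin_map (\<lambda>x. f x z)) \<and>
     (\<forall>x\<in>SV. lin_map (\<lambda>y. f x y)) \<and>
     (\<forall>x\<in>SV. \<forall>y\<in>SV. \<forall>z\<in>SV.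
        f (br eps x y) z = br eps x (f y z) + br eps (f x z) y) \<and>
     (\<forall>x\<in>SV. \<forall>y\<in>SV. \<forall>z\<in>SV.
        f x (br eps y z) = br eps (f x y) z + br eps y (f x z))"

end

theory Submission
  imports Defs
begin


lemma sum_fun_apply: "(\<Sum>i\<in>S. g i) k = (\<Sum>i\<in>S. (g i) k)"
  by (induction S rule: infinite_finite_induct) auto

lemma smult_apply: "smult c v k = c * v k" by (simp add: smult_def)
lemma bvec_apply: "bvec i k = (if k = i then 1 else 0)" by (simp add: bvec_def)
lemma smult_zero_left[simp]: "smult 0 v = 0" by (simp add: smult_def fun_eq_iff)
lemma smult_zero_right[simp]: "smult c 0 = 0" by (simp add: smult_def fun_eq_iff)
lemma smult_add: "smult c (u + v) = smult c u + smult c v" by (simp add: smult_def fun_eq_iff algebra_simps)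
lemma smult_add_left: "smult (c + d) u = smult c u + smult d u" by (simp add: smult_def fun_eq_iff algebra_simps)
lemma smult_smult[simp]: "smult c (smult d u) = smult (c*d) u" by (simp add: smult_def fun_eq_iff)
lemma smult_one[simp]: "smult 1 u = u" by (simp add: smult_def fun_eq_iff)
lemma smult_sum: "smult c (\<Sum>i\<in>S. g i) = (\<Sum>i\<in>S. smult c (g i))"
  by (simp add: fun_eq_iff smult_apply sum_fun_apply sum_distrib_left)
lemma zero_lam: "(\<lambda>k. 0::complex) = 0" by (simp add: fun_eq_iff)

lemma supp_add: "supp (u+v) \<subseteq> supp u \<union> supp v" by (auto simp: supp_def)
lemma SV_add[simp]: "u \<in> SV \<Longrightarrow> v \<in> SV \<Longrightarrow> u + v \<in> SV"
  unfolding SV_def by (auto intro: finite_subset[OF supp_add])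
lemma SV_smult[simp]: "u \<in> SV \<Longrightarrow> smult c u \<in> SV"
  unfolding SV_def by (auto intro: finite_subset[where B="supp u"] simp: supp_def smult_apply)
lemma SV_zero[simp]: "0 \<in> SV" by (simp add: SV_def supp_def)
lemma SV_zero'[simp]: "(\<lambda>k. 0) \<in> SV" by (simp add: SV_def supp_def)
lemma supp_bvec[simp]: "supp (bvec i) = {i}" by (auto simp: supp_def bvec_def)
lemma SV_bvec[simp]: "bvec i \<in> SV" by (simp add: SV_def)
lemma SV_sum[simp]: "(\<And>i. i \<in> S \<Longrightarrow> g i \<in> SV) \<Longrightarrow> (\<Sum>i\<in>S. g i) \<in> SV"
  by (induction S rule: infinite_finite_induct) auto
lemma SV_uminus[simp]: "u \<in> SV \<Longrightarrow> - u \<in> SV"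
  by (simp add: SV_def supp_def)
lemma SV_diff[simp]: "u \<in> SV \<Longrightarrow> v \<in> SV \<Longrightarrow> u - v \<in> SV"
  by (metis SV_add SV_uminus diff_conv_add_uminus)
lemma finite_supp: "u \<in> SV \<Longrightarrow> finite (supp u)" by (simp add: SV_def)

lemma bb_SV[simp]: "bb eps i j \<in> SV"
  by (cases i; cases j) (simp_all add: zero_lam)

lemma br_eq_sum:
  assumes "finite S" "finite T" "supp u \<subseteq> S" "supp v \<subseteq> T"
  shows "br eps u v = (\<Sum>i\<in>S. \<Sum>j\<in>T. smult (u i * v j) (bb eps i j))"
proof -
  have "br eps u v = (\<Sum>i\<in>S. \<Sum>j\<in>supp v. smult (u i * v j) (bb eps i j))"
    unfolding br_def
    by (rule sum.mono_neutral_left) (use assms in \<open>auto simp: supp_def\<close>)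
  also have "\<dots> = (\<Sum>i\<in>S. \<Sum>j\<in>T. smult (u i * v j) (bb eps i j))"
    by (rule sum.cong[OF refl], rule sum.mono_neutral_left) (use assms in \<open>auto simp: supp_def\<close>)
  finally show ?thesis .
qed

lemma br_apply: "br eps u v k = (\<Sum>i\<in>supp u. \<Sum>j\<in>supp v. u i * v j * bb eps i j k)"
  unfolding br_def sum_fun_apply by (simp add: smult_apply)

lemma br_SV[simp]: "br eps u v \<in> SV"
  unfolding br_def by simp

lemma br_add_left:
  assumes "u \<in> SV" "u' \<in> SV" "v \<in> SV"
  shows "br eps (u + u') v = br eps u v + br eps u' v"
proof -
  let ?S = "supp u \<union> supp u'"
  have f: "finite ?S" "finite (supp v)" using assms by (auto simp: finite_supp)
  have "br eps (u + u') v = (\<Sum>i\<in>?S. \<Sum>j\<in>supp v. smult ((u+u') i * v j) (bb eps i j))"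
    by (rule br_eq_sum[OF f]) (use supp_add in auto)
  also have "\<dots> = (\<Sum>i\<in>?S. \<Sum>j\<in>supp v. smult (u i * v j) (bb eps i j))
     + (\<Sum>i\<in>?S. \<Sum>j\<in>supp v. smult (u' i * v j) (bb eps i j))"
    by (simp add: sum.distrib[symmetric] smult_add_left[symmetric] algebra_simps)
  also have "\<dots> = br eps u v + br eps u' v"
    by (simp add: br_eq_sum[OF f])
  finally show ?thesis .
qed

lemma br_add_right:
  assumes "u \<in> SV" "v \<in> SV" "v' \<in> SV"
  shows "br eps u (v + v') = br eps u v + br eps u v'"
proof -
  let ?T = "supp v \<union> supp v'"
  have f: "finite (supp u)" "finite ?T" using assms by (auto simp: finite_supp)
  have "br eps u (v + v') = (\<Sum>i\<in>supp u. \<Sum>j\<in>?T. smult (u i * (v+v') j) (bb eps i j))"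
    by (rule br_eq_sum[OF f]) (use supp_add in auto)
  also have "\<dots> = (\<Sum>i\<in>supp u. \<Sum>j\<in>?T. smult (u i * v j) (bb eps i j))
     + (\<Sum>i\<in>supp u. \<Sum>j\<in>?T. smult (u i * v' j) (bb eps i j))"
    by (simp add: sum.distrib[symmetric] smult_add_left[symmetric] algebra_simps)
  also have "\<dots> = br eps u v + br eps u v'"
    by (simp add: br_eq_sum[OF f])
  finally show ?thesis .
qed

lemma supp_smult: "supp (smult c u) \<subseteq> supp u" by (auto simp: supp_def smult_apply)

lemma br_smult_left:
  assumes "u \<in> SV" "v \<in> SV"
  shows "br eps (smult c u) v = smult c (br eps u v)"
proof -
  have f: "finite (supp u)" "finite (supp v)" using assms by (auto simp: finite_supp)
  have "br eps (smult c u) v = (\<Sum>i\<in>supp u. \<Sum>j\<in>supp v. smult (c * u i * v j) (bb eps i j))"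
    using br_eq_sum[OF f, of "smult c u" v eps] supp_smult[of c u] by (simp add: smult_apply mult.assoc)
  thus ?thesis by (simp add: br_def smult_sum mult.assoc)
qed

lemma br_smult_right:
  assumes "u \<in> SV" "v \<in> SV"
  shows "br eps u (smult c v) = smult c (br eps u v)"
proof -
  have f: "finite (supp u)" "finite (supp v)" using assms by (auto simp: finite_supp)
  have "br eps u (smult c v) = (\<Sum>i\<in>supp u. \<Sum>j\<in>supp v. smult (u i * (c * v j)) (bb eps i j))"
    using br_eq_sum[OF f, of u "smult c v" eps] supp_smult[of c v] by (simp add: smult_apply)
  thus ?thesis by (simp add: br_def smult_sum algebra_simps)
qed

lemma br_bvec[simp]: "br eps (bvec i) (bvec j) = bb eps i j"
  by (simp add: br_def bvec_apply)

lemma br_zero_left[simp]: "br eps 0 v = 0" by (simp add: br_def supp_def)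
lemma br_zero_right[simp]: "br eps u 0 = 0" by (simp add: br_def supp_def)



fun tg :: "real \<Rightarrow> sv_idx \<Rightarrow> sv_idx \<Rightarrow> sv_idx" where
  "tg eps (L m) (L n) = L (m + n)"
| "tg eps (L m) (Y n) = Y (m + n)"
| "tg eps (L m) (M n) = M (m + n)"
| "tg eps (Y m) (L n) = Y (m + n)"
| "tg eps (M m) (L n) = M (m + n)"
| "tg eps (Y m) (Y n) = M (m + n + two_eps eps)"
| "tg eps (Y m) (M n) = L 0"
| "tg eps (M m) (Y n) = L 0"
| "tg eps (M m) (M n) = L 0"

fun cf :: "real \<Rightarrow> sv_idx \<Rightarrow> sv_idx \<Rightarrow> complex" where
  "cf eps (L m) (L n) = of_int (m - n)"
| "cf eps (L m) (Y n) = of_int m / 2 - (of_int n + complex_of_real eps)"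
| "cf eps (L m) (M n) = - of_int n"
| "cf eps (Y m) (L n) = - (of_int n / 2 - (of_int m + complex_of_real eps))"
| "cf eps (M m) (L n) = of_int m"
| "cf eps (Y m) (Y n) = of_int (m - n)"
| "cf eps (Y m) (M n) = 0"
| "cf eps (M m) (Y n) = 0"
| "cf eps (M m) (M n) = 0"

lemma bb_nf: "bb eps i j = smult (cf eps i j) (bvec (tg eps i j))"
  by (cases i; cases j) (simp_all add: zero_lam)

lemma jacobi_basis:
  assumes E: "complex_of_real eps = of_int (two_eps eps) / 2"
  shows "smult (cf eps j k) (bb eps i (tg eps j k)) =
     smult (cf eps i j) (bb eps (tg eps i j) k) + smult (cf eps i k) (bb eps j (tg eps i k))"
  unfolding bb_nf
  by (cases i; cases j; cases k) (auto simp: fun_eq_iff bvec_apply smult_apply E field_simps)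



declare plus_fun_apply[simp del] zero_fun_apply[simp del]

definition addhom :: "(sv_vec \<Rightarrow> sv_vec) \<Rightarrow> bool" where
  "addhom h \<longleftrightarrow> (\<forall>u\<in>SV. \<forall>v\<in>SV. h (u + v) = h u + h v) \<and>
     (\<forall>c. \<forall>u\<in>SV. h (smult c u) = smult c (h u))"

lemma lin_map_addhom: "lin_map h \<Longrightarrow> addhom h"
  by (simp add: lin_map_def addhom_def)

lemma basis_decomp: "u = (\<Sum>i\<in>supp u. smult (u i) (bvec i))"
if "u \<in> SV"
proof (rule ext)
  fix x
  have "(\<Sum>i\<in>supp u. smult (u i) (bvec i)) x = (\<Sum>i\<in>supp u. if i = x then u x else 0)"
    unfolding sum_fun_apply by (rule sum.cong) (auto simp: smult_apply bvec_apply)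
  also have "\<dots> = (if x \<in> supp u then u x else 0)" using finite_supp[OF that] by (simp only: sum.delta)
  also have "\<dots> = u x" by (simp add: supp_def)
  finally show "u x = (\<Sum>i\<in>supp u. smult (u i) (bvec i)) x" by simp
qed

lemma addhom_zero: "addhom h \<Longrightarrow> h 0 = 0"
  unfolding addhom_def by (metis SV_zero smult_zero_left)

lemma addhom_sum:
  assumes "addhom h" "finite S"
  shows "h (\<Sum>i\<in>S. smult (c i) (bvec i)) = (\<Sum>i\<in>S. smult (c i) (h (bvec i)))"
  using assms(2)
proof (induction S rule: finite_induct)
  case empty then show ?case using addhom_zero[OF assms(1)] by (simp only: sum.empty)
next
  case (insert x F)
  then show ?case using assms(1) unfolding addhom_def by simp
qed

lemma addhom_expand: "addhom h \<Longrightarrow> u \<in> SV \<Longrightarrow> h u = (\<Sum>i\<in>supp u. smult (u i) (h (bvec i)))"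
  by (metis addhom_sum basis_decomp finite_supp)

lemma addhom_eq:
  assumes "addhom h" "addhom g" "\<And>i. h (bvec i) = g (bvec i)" "u \<in> SV"
  shows "h u = g u"
  using addhom_expand[OF assms(1,4)] addhom_expand[OF assms(2,4)] assms(3) by simp

lemma bilin_eq:
  assumes "\<And>v. v \<in> SV \<Longrightarrow> addhom (\<lambda>u. Ba u v)" "\<And>u. u \<in> SV \<Longrightarrow> addhom (\<lambda>v. Ba u v)"
    "\<And>v. v \<in> SV \<Longrightarrow> addhom (\<lambda>u. Bb u v)" "\<And>u. u \<in> SV \<Longrightarrow> addhom (\<lambda>v. Bb u v)"
    "\<And>i j. Ba (bvec i) (bvec j) = Bb (bvec i) (bvec j)" "u \<in> SV" "v \<in> SV"
  shows "Ba u v = Bb u v"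
proof -
  have "\<And>i. Ba (bvec i) v = Bb (bvec i) v"
    by (rule addhom_eq[OF assms(2) assms(4)]) (use assms(5,7) in auto)
  thus ?thesis by (rule addhom_eq[OF assms(1) assms(3), OF assms(7) assms(7) _ assms(6)])
qed

lemma addhom_br_left: "v \<in> SV \<Longrightarrow> addhom (\<lambda>u. br eps u v)"
  by (simp add: addhom_def br_add_left br_smult_left)
lemma addhom_br_right: "u \<in> SV \<Longrightarrow> addhom (\<lambda>v. br eps u v)"
  by (simp add: addhom_def br_add_right br_smult_right)

lemma lin_map_br: "u \<in> SV \<Longrightarrow> lin_map (br eps u)"
  by (simp add: lin_map_def br_add_right br_smult_right)

lemma addhom_comp: "lin_map h \<Longrightarrow> addhom k \<Longrightarrow> addhom (\<lambda>u. k (h u))"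
  by (simp add: lin_map_def addhom_def)

lemma addhom_add: "addhom h \<Longrightarrow> addhom k \<Longrightarrow> addhom (\<lambda>u. h u + k u)"
  by (simp add: addhom_def smult_add algebra_simps)

definition der :: "real \<Rightarrow> (sv_vec \<Rightarrow> sv_vec) \<Rightarrow> bool" where
  "der eps h \<longleftrightarrow> lin_map h \<and> (\<forall>u\<in>SV. \<forall>v\<in>SV. h (br eps u v) = br eps (h u) v + br eps u (h v))"

lemma der_basis:
  assumes lm: "lin_map h"
    and b: "\<And>i j. h (bb eps i j) = br eps (h (bvec i)) (bvec j) + br eps (bvec i) (h (bvec j))"
  shows "der eps h"
  unfolding der_def
proof (intro conjI lm ballI)
  fix u v assume uv: "u \<in> SV" "v \<in> SV"
  have hS: "\<And>w. w \<in> SV \<Longrightarrow> h w \<in> SV" using lm by (simp add: lin_map_def)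
  show "h (br eps u v) = br eps (h u) v + br eps u (h v)"
  proof (rule bilin_eq[where Ba="\<lambda>u v. h (br eps u v)" and Bb="\<lambda>u v. br eps (h u) v + br eps u (h v)"])
    fix v :: sv_vec assume v: "v \<in> SV"
    show "addhom (\<lambda>u. h (br eps u v))"
      using lm v by (simp add: lin_map_def addhom_def br_add_left br_smult_left)
    show "addhom (\<lambda>u. br eps (h u) v + br eps u (h v))"
      using lm v hS by (simp add: lin_map_def addhom_def br_add_left br_smult_left smult_add algebra_simps)
  next
    fix u :: sv_vec assume u: "u \<in> SV"
    show "addhom (\<lambda>v. h (br eps u v))"
      using lm u by (simp add: lin_map_def addhom_def br_add_right br_smult_right)
    show "addhom (\<lambda>v. br eps (h u) v + br eps u (h v))"
      using lm u hS by (simp add: lin_map_def addhom_def br_add_right br_smult_right smult_add algebra_simps)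
  qed (use uv b in auto)
qed

lemma der_add: "der eps h \<Longrightarrow> der eps k \<Longrightarrow> der eps (\<lambda>u. h u + k u)"
  unfolding der_def lin_map_def
  by (simp add: br_add_left br_add_right smult_add algebra_simps)

lemma der_smult: "der eps h \<Longrightarrow> der eps (\<lambda>u. smult c (h u))"
  unfolding der_def lin_map_def
  by (simp add: br_smult_left br_smult_right smult_add ac_simps)

lemma der_br_bvec:
  assumes E: "complex_of_real eps = of_int (two_eps eps) / 2"
  shows "der eps (br eps (bvec i))"
proof (rule der_basis[OF lin_map_br[OF SV_bvec]])
  fix j k
  show "br eps (bvec i) (bb eps j k) = br eps (br eps (bvec i) (bvec j)) (bvec k) + br eps (bvec j) (br eps (bvec i) (bvec k))"
    using jacobi_basis[OF E, of j k i]
    by (simp add: bb_nf[of eps i j] bb_nf[of eps i k] bb_nf[of eps j k] br_smult_left br_smult_right)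
qed



lemma lin_ext_eq_sum:
  assumes "finite S" "supp u \<subseteq> S"
  shows "lin_ext g u = (\<Sum>i\<in>S. smult (u i) (g i))"
  unfolding lin_ext_def
  by (rule sum.mono_neutral_left) (use assms in \<open>auto simp: supp_def\<close>)

lemma lin_map_lin_ext:
  assumes "\<And>i. g i \<in> SV"
  shows "lin_map (lin_ext g)"
  unfolding lin_map_def
proof (intro conjI ballI allI)
  fix u assume "u \<in> SV" thus "lin_ext g u \<in> SV" by (simp add: lin_ext_def assms)
next
  fix u v assume uv: "u \<in> SV" "v \<in> SV"
  let ?S = "supp u \<union> supp v"
  have f: "finite ?S" using uv by (simp add: finite_supp)
  have "lin_ext g (u + v) = (\<Sum>i\<in>?S. smult ((u+v) i) (g i))"
    by (rule lin_ext_eq_sum[OF f]) (use supp_add in auto)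
  also have "\<dots> = (\<Sum>i\<in>?S. smult (u i) (g i)) + (\<Sum>i\<in>?S. smult (v i) (g i))"
    by (simp add: sum.distrib[symmetric] smult_add_left plus_fun_apply)
  also have "\<dots> = lin_ext g u + lin_ext g v"
    by (simp add: lin_ext_eq_sum[OF f])
  finally show "lin_ext g (u + v) = lin_ext g u + lin_ext g v" .
next
  fix c u assume u: "u \<in> SV"
  have "lin_ext g (smult c u) = (\<Sum>i\<in>supp u. smult (smult c u i) (g i))"
    by (rule lin_ext_eq_sum) (use u supp_smult in \<open>auto simp: finite_supp\<close>)
  thus "lin_ext g (smult c u) = smult c (lin_ext g u)"
    by (simp add: lin_ext_def smult_sum smult_apply)
qed

lemma lin_ext_bvec[simp]: "lin_ext g (bvec i) = g i"
  by (simp add: lin_ext_def bvec_apply)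

lemma lin_ext_smult_bvec: "\<forall>i. g i \<in> SV \<Longrightarrow> lin_ext g (smult c (bvec i)) = smult c (g i)"
  using lin_map_lin_ext[of g] by (simp add: lin_map_def)

lemma D1b_SV[simp]: "D1b i \<in> SV" by (cases i) simp_all
lemma D2b_SV[simp]: "D2b i \<in> SV" by (cases i) simp_all
lemma D3b_SV[simp]: "D3b i \<in> SV" by (cases i) simp_all

lemma der_D1: "der eps D1"
  unfolding D1_def
proof (rule der_basis[OF lin_map_lin_ext[OF D1b_SV]])
  fix i j
  show "lin_ext D1b (bb eps i j) = br eps (lin_ext D1b (bvec i)) (bvec j) + br eps (bvec i) (lin_ext D1b (bvec j))"
    unfolding bb_nf[of eps i j] lin_ext_smult_bvec[OF allI[OF D1b_SV]]
    by (cases i; cases j; simp add: zero_lam bb_nf br_smult_left br_smult_right;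
        auto simp: fun_eq_iff plus_fun_apply zero_fun_apply smult_apply bvec_apply algebra_simps)
qed

lemma der_D2: "der eps D2"
  unfolding D2_def
proof (rule der_basis[OF lin_map_lin_ext[OF D2b_SV]])
  fix i j
  show "lin_ext D2b (bb eps i j) = br eps (lin_ext D2b (bvec i)) (bvec j) + br eps (bvec i) (lin_ext D2b (bvec j))"
    unfolding bb_nf[of eps i j] lin_ext_smult_bvec[OF allI[OF D2b_SV]]
    by (cases i; cases j; simp add: zero_lam bb_nf br_smult_left br_smult_right;
        auto simp: fun_eq_iff plus_fun_apply zero_fun_apply smult_apply bvec_apply algebra_simps)
qed

lemma der_D3: "der eps D3"
  unfolding D3_def
proof (rule der_basis[OF lin_map_lin_ext[OF D3b_SV]])
  fix i j
  show "lin_ext D3b (bb eps i j) = br eps (lin_ext D3b (bvec i)) (bvec j) + br eps (bvec i) (lin_ext D3b (bvec j))"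
    unfolding bb_nf[of eps i j] lin_ext_smult_bvec[OF allI[OF D3b_SV]]
    by (cases i; cases j; simp add: zero_lam bb_nf br_smult_left br_smult_right;
        auto simp: fun_eq_iff plus_fun_apply zero_fun_apply smult_apply bvec_apply algebra_simps)
qed



lemma der_zero: "der eps (\<lambda>u. 0)"
  by (simp add: der_def lin_map_def)

lemma der_sum: "finite S \<Longrightarrow> (\<And>i. i \<in> S \<Longrightarrow> der eps (h i)) \<Longrightarrow> der eps (\<lambda>u. \<Sum>i\<in>S. h i u)"
proof (induction S rule: finite_induct)
  case empty then show ?case by (simp add: der_zero)
next
  case (insert x F)
  then show ?case by (simp add: der_add)
qed

lemma der_cong:
  assumes "der eps h" "\<And>u. u \<in> SV \<Longrightarrow> h u = k u"
  shows "der eps k"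
  using assms unfolding der_def lin_map_def by (simp add: br_SV)

lemma der_br:
  assumes E: "complex_of_real eps = of_int (two_eps eps) / 2" and a: "a \<in> SV"
  shows "der eps (br eps a)"
proof (rule der_cong)
  show "der eps (\<lambda>u. \<Sum>i\<in>supp a. smult (a i) (br eps (bvec i) u))"
    by (rule der_sum) (auto simp: finite_supp a intro!: der_smult der_br_bvec E)
  fix u :: sv_vec assume u: "u \<in> SV"
  show "(\<Sum>i\<in>supp a. smult (a i) (br eps (bvec i) u)) = br eps a u"
    using addhom_expand[OF addhom_br_left[OF u] a] by simp
qed



fun deg2 :: "real \<Rightarrow> sv_idx \<Rightarrow> int" where
  "deg2 eps (L m) = 2 * m"
| "deg2 eps (Y m) = 2 * m + two_eps eps"
| "deg2 eps (M m) = 2 * m"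

lemma bb_deg: "bb eps i j k \<noteq> 0 \<Longrightarrow> deg2 eps k = deg2 eps i + deg2 eps j"
  by (cases i; cases j) (auto simp: bvec_apply smult_apply split: if_splits)

lemma bb_L0:
  assumes E: "complex_of_real eps = of_int (two_eps eps) / 2"
  shows "bb eps (L 0) j = smult (- of_int (deg2 eps j) / 2) (bvec j)"
  by (cases j) (auto simp: E fun_eq_iff smult_apply bvec_apply field_simps)

lemma br_right_bvec_apply: "br eps u (bvec j) k = (\<Sum>i\<in>supp u. u i * bb eps i j k)"
  by (simp add: br_apply bvec_apply)

lemma br_L0_apply:
  assumes E: "complex_of_real eps = of_int (two_eps eps) / 2" and u: "u \<in> SV"
  shows "br eps (bvec (L 0)) u k = - of_int (deg2 eps k) / 2 * u k"
proof -
  have "br eps (bvec (L 0)) u k = (\<Sum>j\<in>supp u. if j = k then - of_int (deg2 eps k) / 2 * u k else 0)"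
    by (auto simp: br_apply bvec_apply bb_L0[OF E] smult_apply intro!: sum.cong)
  also have "\<dots> = - of_int (deg2 eps k) / 2 * u k"
    using finite_supp[OF u] by (simp add: sum.delta supp_def)
  finally show ?thesis .
qed

definition Aop :: "real \<Rightarrow> sv_vec \<Rightarrow> sv_vec" where
  "Aop eps d = (\<lambda>k. if deg2 eps k = 0 then 0 else 2 * d k / of_int (deg2 eps k))"

lemma supp_Aop: "supp (Aop eps d) \<subseteq> supp d"
  by (auto simp: supp_def Aop_def split: if_splits)

lemma SV_Aop[simp]: "d \<in> SV \<Longrightarrow> Aop eps d \<in> SV"
  unfolding SV_def using supp_Aop finite_subset by blast

lemma degree_lemma:
  assumes E: "complex_of_real eps = of_int (two_eps eps) / 2"
    and lm: "lin_map D"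
    and lb: "\<And>u v. u \<in> SV \<Longrightarrow> v \<in> SV \<Longrightarrow> D (br eps u v) = br eps (D u) v + br eps u (D v)"
  shows "D (bvec j) k - br eps (Aop eps (D (bvec (L 0)))) (bvec j) k =
    (if deg2 eps k = deg2 eps j then D (bvec j) k else 0)"
proof -
  define d where "d = D (bvec (L 0))"
  have dS: "d \<in> SV" and DjS: "D (bvec j) \<in> SV" using lm unfolding d_def lin_map_def by auto
  have "D (bb eps (L 0) j) = br eps d (bvec j) + br eps (bvec (L 0)) (D (bvec j))"
    using lb[of "bvec (L 0)" "bvec j"] by (simp add: d_def)
  hence "smult (- of_int (deg2 eps j) / 2) (D (bvec j)) = br eps d (bvec j) + br eps (bvec (L 0)) (D (bvec j))"
    using lm by (simp add: bb_L0[OF E] lin_map_def)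
  from fun_cong[OF this, of k]
  have "- of_int (deg2 eps j) / 2 * D (bvec j) k = br eps d (bvec j) k - of_int (deg2 eps k) / 2 * D (bvec j) k" by (simp add: smult_apply plus_fun_apply br_L0_apply[OF E DjS])
  hence key: "br eps d (bvec j) k = (of_int (deg2 eps k) - of_int (deg2 eps j)) / 2 * D (bvec j) k"
    by (simp add: field_simps)
  have "br eps (Aop eps d) (bvec j) k = (\<Sum>i\<in>supp d. Aop eps d i * bb eps i j k)"
    unfolding br_right_bvec_apply
    by (rule sum.mono_neutral_left) (use supp_Aop finite_supp[OF dS] in \<open>auto simp: supp_def\<close>)
  also have "\<dots> = (\<Sum>i\<in>supp d. (if deg2 eps k = deg2 eps j then 0 else
       2 / (of_int (deg2 eps k) - of_int (deg2 eps j)) * (d i * bb eps i j k)))"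
  proof (rule sum.cong[OF refl])
    fix i
    show "Aop eps d i * bb eps i j k = (if deg2 eps k = deg2 eps j then 0 else
       2 / (of_int (deg2 eps k) - of_int (deg2 eps j)) * (d i * bb eps i j k))"
    proof (cases "bb eps i j k = 0")
      case True thus ?thesis by simp
    next
      case False
      hence dg: "deg2 eps k = deg2 eps i + deg2 eps j" by (rule bb_deg)
      have "of_int (deg2 eps k) - of_int (deg2 eps j) = (of_int (deg2 eps i) :: complex)"
        using dg by simp
      thus ?thesis using dg by (auto simp: Aop_def field_simps)
    qed
  qed
  also have "\<dots> = (if deg2 eps k = deg2 eps j then 0 else
       2 / (of_int (deg2 eps k) - of_int (deg2 eps j)) * br eps d (bvec j) k)"
    by (simp add: br_right_bvec_apply sum_distrib_left)
  also have "\<dots> = (if deg2 eps k = deg2 eps j then 0 else D (bvec j) k)"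
  proof (cases "deg2 eps k = deg2 eps j")
    case False
    hence nz: "(of_int (deg2 eps k) - of_int (deg2 eps j) :: complex) \<noteq> 0" by simp
    show ?thesis using False key nz by (simp add: field_simps)
  qed simp
  finally show ?thesis by (simp add: d_def)
qed



lemmas ev = plus_fun_apply smult_apply bvec_apply zero_fun_apply

lemma odd_ne1[simp]: "2 * (x::int) + 1 \<noteq> 2 * n" by presburger
lemma odd_ne2[simp]: "2 * (x::int) \<noteq> 2 * n + 1" by presburger

lemma hom_expand0:
  assumes te: "two_eps eps = 0" and h: "\<And>k. deg2 eps k \<noteq> 2 * n \<Longrightarrow> v k = 0"
  shows "v = smult (v (L n)) (bvec (L n)) + smult (v (M n)) (bvec (M n)) + smult (v (Y n)) (bvec (Y n))"
proof
  fix k show "v k = (smult (v (L n)) (bvec (L n)) + smult (v (M n)) (bvec (M n)) + smult (v (Y n)) (bvec (Y n))) k"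
    using h[of k] te by (cases k) (auto simp: ev)
qed

lemma hom_expand1e:
  assumes te: "two_eps eps = 1" and h: "\<And>k. deg2 eps k \<noteq> 2 * n \<Longrightarrow> v k = 0"
  shows "v = smult (v (L n)) (bvec (L n)) + smult (v (M n)) (bvec (M n))"
proof
  fix k show "v k = (smult (v (L n)) (bvec (L n)) + smult (v (M n)) (bvec (M n))) k"
    using h[of k] te by (cases k) (auto simp: ev)
qed

lemma hom_expand1o:
  assumes te: "two_eps eps = 1" and h: "\<And>k. deg2 eps k \<noteq> 2 * n + 1 \<Longrightarrow> v k = 0"
  shows "v = smult (v (Y n)) (bvec (Y n))"
proof
  fix k show "v k = (smult (v (Y n)) (bvec (Y n))) k"
    using h[of k] te by (cases k) (auto simp: ev)
qed

definition "al Ed = Ed (bvec (L 1)) (L 1)"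
definition "gm eps Ed = (if two_eps eps = 0 then -2 * Ed (bvec (L 1)) (Y 1) else 0)"
definition "cc1 Ed = (Ed (bvec (L 1)) (M 1) + Ed (bvec (L (-1))) (M (-1))) / 2"
definition "cc2 Ed = (Ed (bvec (L 1)) (M 1) - Ed (bvec (L (-1))) (M (-1))) / 2"
definition "cc3 eps Ed = Ed (bvec (Y 0)) (Y 0) - al Ed * complex_of_real eps"
definition "aa0 eps Ed = smult (- al Ed) (bvec (L 0)) + smult (gm eps Ed) (bvec (Y 0))"
definition "G0 eps Ed u = smult (cc1 Ed) (D1 u) + smult (cc2 Ed) (D2 u) + smult (cc3 eps Ed) (D3 u)
   + br eps (aa0 eps Ed) u"

lemma core0:
  assumes te: "two_eps eps = 0" and ce: "complex_of_real eps = 0"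
    and lm: "lin_map Ed"
    and lb: "\<And>u v. u \<in> SV \<Longrightarrow> v \<in> SV \<Longrightarrow> Ed (br eps u v) = br eps (Ed u) v + br eps u (Ed v)"
    and hom: "\<And>j k. deg2 eps k \<noteq> deg2 eps j \<Longrightarrow> Ed (bvec j) k = 0"
  shows "Ed (bvec (L 1)) = G0 eps Ed (bvec (L 1))"
    "Ed (bvec (L (-1))) = G0 eps Ed (bvec (L (-1)))"
    "Ed (bvec (L 2)) = G0 eps Ed (bvec (L 2))"
    "Ed (bvec (L (-2))) = G0 eps Ed (bvec (L (-2)))"
    "Ed (bvec (Y 0)) = G0 eps Ed (bvec (Y 0))"
proof -
  have sm: "\<And>c v. v \<in> SV \<Longrightarrow> Ed (smult c v) = smult c (Ed v)" using lm by (simp add: lin_map_def)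
  have ex: "\<And>j n. deg2 eps j = 2 * n \<Longrightarrow> Ed (bvec j) = smult (Ed (bvec j) (L n)) (bvec (L n)) + smult (Ed (bvec j) (M n)) (bvec (M n)) + smult (Ed (bvec j) (Y n)) (bvec (Y n))"
    by (rule hom_expand0[OF te]) (use hom in auto)
  define a where "a = Ed (bvec (L 1)) (L 1)"
  define b where "b = Ed (bvec (L 1)) (M 1)"
  define c where "c = Ed (bvec (L 1)) (Y 1)"
  define a' where "a' = Ed (bvec (L (-1))) (L (-1))"
  define b' where "b' = Ed (bvec (L (-1))) (M (-1))"
  define c' where "c' = Ed (bvec (L (-1))) (Y (-1))"
  define x0 where "x0 = Ed (bvec (L 0)) (L 0)"
  define y0 where "y0 = Ed (bvec (L 0)) (M 0)"
  define z0 where "z0 = Ed (bvec (L 0)) (Y 0)"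
  define p2 where "p2 = Ed (bvec (L 2)) (L 2)"
  define q2 where "q2 = Ed (bvec (L 2)) (M 2)"
  define r2 where "r2 = Ed (bvec (L 2)) (Y 2)"
  define pm where "pm = Ed (bvec (L (-2))) (L (-2))"
  define qm where "qm = Ed (bvec (L (-2))) (M (-2))"
  define rm where "rm = Ed (bvec (L (-2))) (Y (-2))"
  define x where "x = Ed (bvec (Y 0)) (L 0)"
  define y where "y = Ed (bvec (Y 0)) (M 0)"
  define s where "s = Ed (bvec (Y 0)) (Y 0)"
  define u1 where "u1 = Ed (bvec (Y 1)) (L 1)"
  define v1 where "v1 = Ed (bvec (Y 1)) (M 1)"
  define w1 where "w1 = Ed (bvec (Y 1)) (Y 1)"
  have e1: "Ed (bvec (L 1)) = smult a (bvec (L 1)) + smult b (bvec (M 1)) + smult c (bvec (Y 1))"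
    using ex[of "L 1" 1] by (simp add: a_def b_def c_def)
  have em1: "Ed (bvec (L (-1))) = smult a' (bvec (L (-1))) + smult b' (bvec (M (-1))) + smult c' (bvec (Y (-1)))"
    using ex[of "L (-1)" "-1"] by (simp add: a'_def b'_def c'_def)
  have e0: "Ed (bvec (L 0)) = smult x0 (bvec (L 0)) + smult y0 (bvec (M 0)) + smult z0 (bvec (Y 0))"
    using ex[of "L 0" 0] by (simp add: x0_def y0_def z0_def)
  have e2: "Ed (bvec (L 2)) = smult p2 (bvec (L 2)) + smult q2 (bvec (M 2)) + smult r2 (bvec (Y 2))"
    using ex[of "L 2" 2] by (simp add: p2_def q2_def r2_def)
  have em2: "Ed (bvec (L (-2))) = smult pm (bvec (L (-2))) + smult qm (bvec (M (-2))) + smult rm (bvec (Y (-2)))"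
    using ex[of "L (-2)" "-2"] by (simp add: pm_def qm_def rm_def)
  have eY0: "Ed (bvec (Y 0)) = smult x (bvec (L 0)) + smult y (bvec (M 0)) + smult s (bvec (Y 0))"
    using ex[of "Y 0" 0] te by (simp add: x_def y_def s_def)
  have eY1: "Ed (bvec (Y 1)) = smult u1 (bvec (L 1)) + smult v1 (bvec (M 1)) + smult w1 (bvec (Y 1))"
    using ex[of "Y 1" 1] te by (simp add: u1_def v1_def w1_def)
  note exps = e1 em1 e0 e2 em2 eY0 eY1
  have rel: "Ed (bb eps i j) = br eps (Ed (bvec i)) (bvec j) + br eps (bvec i) (Ed (bvec j))" for i j
    using lb[of "bvec i" "bvec j"] by simp
  have R1: "smult (-1) (Ed (bvec (L 1))) = br eps (Ed (bvec (L 0))) (bvec (L 1)) + br eps (bvec (L 0)) (Ed (bvec (L 1)))"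
    using rel[of "L 0" "L 1"] by (simp add: sm)
  note simps = br_add_left br_add_right br_smult_left br_smult_right SV_add SV_smult SV_bvec ce te
  have R1: "smult (-1) (Ed (bvec (L 1))) = br eps (Ed (bvec (L 0))) (bvec (L 1)) + br eps (bvec (L 0)) (Ed (bvec (L 1)))"
    using rel[of "L 0" "L 1"] by (simp add: sm)
  note R1 = R1[unfolded exps, simplified simps, simplified]
  have R2: "smult 2 (Ed (bvec (L 0))) = br eps (Ed (bvec (L 1))) (bvec (L (-1))) + br eps (bvec (L 1)) (Ed (bvec (L (-1))))"
    using rel[of "L 1" "L (-1)"] by (simp add: sm)
  note R2 = R2[unfolded exps, simplified simps, simplified]
  have R3: "smult 3 (Ed (bvec (L 1))) = br eps (Ed (bvec (L 2))) (bvec (L (-1))) + br eps (bvec (L 2)) (Ed (bvec (L (-1))))"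
    using rel[of "L 2" "L (-1)"] by (simp add: sm)
  note R3 = R3[unfolded exps, simplified simps, simplified]
  have R4: "smult (-3) (Ed (bvec (L (-1)))) = br eps (Ed (bvec (L (-2)))) (bvec (L 1)) + br eps (bvec (L (-2))) (Ed (bvec (L 1)))"
    using rel[of "L (-2)" "L 1"] by (simp add: sm)
  note R4 = R4[unfolded exps, simplified simps, simplified]
  have R5: "smult (1/2) (Ed (bvec (Y 1))) = br eps (Ed (bvec (L 1))) (bvec (Y 0)) + br eps (bvec (L 1)) (Ed (bvec (Y 0)))"
    using rel[of "L 1" "Y 0"] by (simp add: sm ce)
  note R5 = R5[unfolded exps, simplified simps, simplified]
  have R6: "smult (-3/2) (Ed (bvec (Y 0))) = br eps (Ed (bvec (L (-1)))) (bvec (Y 1)) + br eps (bvec (L (-1))) (Ed (bvec (Y 1)))"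
    using rel[of "L (-1)" "Y 1"] by (simp add: sm ce)
  note R6 = R6[unfolded exps, simplified simps, simplified]
  have C: "x0 = 0" "z0 = 0" "a' = -a" "c' = -c" "p2 = 2 * a" "q2 = (3*b - b')/2" "r2 = 2 * c"
     "pm = -2 * a" "qm = (3*b' - b)/2" "rm = -2*c" "x = 0" "y = 0"
  proof -
    note f = fun_cong[where x="L 1"] fun_cong[where x="Y 1"] fun_cong[where x="M 1"]
       fun_cong[where x="L 0"] fun_cong[where x="Y 0"] fun_cong[where x="M 0"]
       fun_cong[where x="L (-1)"] fun_cong[where x="Y (-1)"] fun_cong[where x="M (-1)"]
    have R1c: "-a = -x0 - a" "-c = z0 * (-1/2) - c" using f(1,2)[OF R1] by (simp_all add: ev ce)
    show x0: "x0 = 0" using R1c by algebra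
    show z0: "z0 = 0" using R1c by algebra
    have R2c: "2 * x0 = 2*a + 2*a'" "2 * z0 = c * (3/2) + c' * (3/2)" using f(4,5)[OF R2] by (simp_all add: ev ce)
    show a': "a' = -a" using R2c x0 by algebra
    show c': "c' = -c" using R2c z0 by algebra
    have R3c: "3*a = 3 * p2 + 3 * a'" "3*b = 2 * q2 + b'" "3*c = r2 * (5/2) + c' * 2" using f(1,3,2)[OF R3] by (simp_all add: ev ce)
    show "p2 = 2 * a" "q2 = (3*b - b')/2" "r2 = 2 * c" using R3c a' c' by algebra+
    have R4c: "-3*a' = -3 * pm - 3 * a" "-3*b' = -2 * qm - b" "-3*c' = rm * (-5/2) - c * 2" using f(7,9,8)[OF R4] by (simp_all add: ev ce)
    show "pm = -2 * a" "qm = (3*b' - b)/2" "rm = -2*c" using R4c a' c' by algebra+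
    have R5c: "u1 / 2 = x" using f(1)[OF R5] by (simp add: ev ce te)
    have R6c: "-3/2 * x = - u1 * 2" "-3/2*y = - (c' * 2) - v1" using f(4,6)[OF R6] by (simp_all add: ev ce te)
    have R5d: "v1 / 2 = c" using f(3)[OF R5] by (simp add: ev ce te)
    have u1x: "u1 = 2 * x" using R5c by (simp add: field_simps)
    show "x = 0" using R6c(1) unfolding u1x by (simp add: field_simps)
    have v1c: "v1 = 2 * c" using R5d by (simp add: field_simps)
    show "y = 0" using R6c(2) unfolding v1c c' by (simp add: field_simps)
  qed
  have K: "al Ed = a" "gm eps Ed = -2 * c" "cc1 Ed = (b + b')/2" "cc2 Ed = (b - b')/2" "cc3 eps Ed = s"
    by (simp_all add: al_def gm_def cc1_def cc2_def cc3_def a_def c_def b_def b'_def s_def te ce)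
  have G: "G0 eps Ed (bvec i) = smult ((b + b')/2) (D1b i) + smult ((b - b')/2) (D2b i) + smult s (D3b i)
     + smult (-a) (bb eps (L 0) i) + smult (-2 * c) (bb eps (Y 0) i)" for i
    by (simp add: G0_def aa0_def D1_def D2_def D3_def K br_add_left br_smult_left)
  show "Ed (bvec (L 1)) = G0 eps Ed (bvec (L 1))"
    unfolding G e1 by (auto simp: fun_eq_iff ev C ce te field_simps)
  show "Ed (bvec (L (-1))) = G0 eps Ed (bvec (L (-1)))"
    unfolding G em1 by (auto simp: fun_eq_iff ev C ce te field_simps)
  show "Ed (bvec (L 2)) = G0 eps Ed (bvec (L 2))"
    unfolding G e2 by (auto simp: fun_eq_iff ev C ce te field_simps)
  show "Ed (bvec (L (-2))) = G0 eps Ed (bvec (L (-2)))"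
    unfolding G em2 by (auto simp: fun_eq_iff ev C ce te field_simps)
  show "Ed (bvec (Y 0)) = G0 eps Ed (bvec (Y 0))"
    unfolding G eY0 by (auto simp: fun_eq_iff ev C ce te field_simps)
qed



lemma core1:
  assumes te: "two_eps eps = 1" and ce: "complex_of_real eps = 1/2"
    and lm: "lin_map Ed"
    and lb: "\<And>u v. u \<in> SV \<Longrightarrow> v \<in> SV \<Longrightarrow> Ed (br eps u v) = br eps (Ed u) v + br eps u (Ed v)"
    and hom: "\<And>j k. deg2 eps k \<noteq> deg2 eps j \<Longrightarrow> Ed (bvec j) k = 0"
  shows "Ed (bvec (L 1)) = G0 eps Ed (bvec (L 1))"
    "Ed (bvec (L (-1))) = G0 eps Ed (bvec (L (-1)))"
    "Ed (bvec (L 2)) = G0 eps Ed (bvec (L 2))"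
    "Ed (bvec (L (-2))) = G0 eps Ed (bvec (L (-2)))"
    "Ed (bvec (Y 0)) = G0 eps Ed (bvec (Y 0))"
proof -
  have sm: "\<And>c v. v \<in> SV \<Longrightarrow> Ed (smult c v) = smult c (Ed v)" using lm by (simp add: lin_map_def)
  have ex: "\<And>j n. deg2 eps j = 2 * n \<Longrightarrow> Ed (bvec j) = smult (Ed (bvec j) (L n)) (bvec (L n)) + smult (Ed (bvec j) (M n)) (bvec (M n))"
    by (rule hom_expand1e[OF te]) (use hom in auto)
  have exo: "\<And>j n. deg2 eps j = 2 * n + 1 \<Longrightarrow> Ed (bvec j) = smult (Ed (bvec j) (Y n)) (bvec (Y n))"
    by (rule hom_expand1o[OF te]) (use hom in auto)
  define a where "a = Ed (bvec (L 1)) (L 1)"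
  define b where "b = Ed (bvec (L 1)) (M 1)"
  define a' where "a' = Ed (bvec (L (-1))) (L (-1))"
  define b' where "b' = Ed (bvec (L (-1))) (M (-1))"
  define x0 where "x0 = Ed (bvec (L 0)) (L 0)"
  define y0 where "y0 = Ed (bvec (L 0)) (M 0)"
  define p2 where "p2 = Ed (bvec (L 2)) (L 2)"
  define q2 where "q2 = Ed (bvec (L 2)) (M 2)"
  define pm where "pm = Ed (bvec (L (-2))) (L (-2))"
  define qm where "qm = Ed (bvec (L (-2))) (M (-2))"
  define s where "s = Ed (bvec (Y 0)) (Y 0)"
  have e1: "Ed (bvec (L 1)) = smult a (bvec (L 1)) + smult b (bvec (M 1))"
    using ex[of "L 1" 1] by (simp add: a_def b_def)
  have em1: "Ed (bvec (L (-1))) = smult a' (bvec (L (-1))) + smult b' (bvec (M (-1)))"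
    using ex[of "L (-1)" "-1"] by (simp add: a'_def b'_def)
  have e0: "Ed (bvec (L 0)) = smult x0 (bvec (L 0)) + smult y0 (bvec (M 0))"
    using ex[of "L 0" 0] by (simp add: x0_def y0_def)
  have e2: "Ed (bvec (L 2)) = smult p2 (bvec (L 2)) + smult q2 (bvec (M 2))"
    using ex[of "L 2" 2] by (simp add: p2_def q2_def)
  have em2: "Ed (bvec (L (-2))) = smult pm (bvec (L (-2))) + smult qm (bvec (M (-2)))"
    using ex[of "L (-2)" "-2"] by (simp add: pm_def qm_def)
  have eY0: "Ed (bvec (Y 0)) = smult s (bvec (Y 0))"
    using exo[of "Y 0" 0] te by (simp add: s_def)
  note exps = e1 em1 e0 e2 em2 eY0
  have rel: "Ed (bb eps i j) = br eps (Ed (bvec i)) (bvec j) + br eps (bvec i) (Ed (bvec j))" for i j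
    using lb[of "bvec i" "bvec j"] by simp
  note simps = br_add_left br_add_right br_smult_left br_smult_right SV_add SV_smult SV_bvec ce te
  have R1: "smult (-1) (Ed (bvec (L 1))) = br eps (Ed (bvec (L 0))) (bvec (L 1)) + br eps (bvec (L 0)) (Ed (bvec (L 1)))"
    using rel[of "L 0" "L 1"] by (simp add: sm)
  note R1 = R1[unfolded exps, simplified simps, simplified]
  have R2: "smult 2 (Ed (bvec (L 0))) = br eps (Ed (bvec (L 1))) (bvec (L (-1))) + br eps (bvec (L 1)) (Ed (bvec (L (-1))))"
    using rel[of "L 1" "L (-1)"] by (simp add: sm)
  note R2 = R2[unfolded exps, simplified simps, simplified]
  have R3: "smult 3 (Ed (bvec (L 1))) = br eps (Ed (bvec (L 2))) (bvec (L (-1))) + br eps (bvec (L 2)) (Ed (bvec (L (-1))))"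
    using rel[of "L 2" "L (-1)"] by (simp add: sm)
  note R3 = R3[unfolded exps, simplified simps, simplified]
  have R4: "smult (-3) (Ed (bvec (L (-1)))) = br eps (Ed (bvec (L (-2)))) (bvec (L 1)) + br eps (bvec (L (-2))) (Ed (bvec (L 1)))"
    using rel[of "L (-2)" "L 1"] by (simp add: sm)
  note R4 = R4[unfolded exps, simplified simps, simplified]
  have C: "x0 = 0" "a' = -a" "p2 = 2 * a" "q2 = (3*b - b')/2"
     "pm = -2 * a" "qm = (3*b' - b)/2"
  proof -
    note f = fun_cong[where x="L 1"] fun_cong[where x="Y 1"] fun_cong[where x="M 1"]
       fun_cong[where x="L 0"] fun_cong[where x="Y 0"] fun_cong[where x="M 0"]
       fun_cong[where x="L (-1)"] fun_cong[where x="Y (-1)"] fun_cong[where x="M (-1)"]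
    have R1c: "-a = -x0 - a" using f(1)[OF R1] by (simp_all add: ev ce)
    show x0: "x0 = 0" using R1c by algebra
    have R2c: "2 * x0 = 2*a + 2*a'" using f(4)[OF R2] by (simp_all add: ev ce)
    show a': "a' = -a" using R2c x0 by algebra
    have R3c: "3*a = 3 * p2 + 3 * a'" "3*b = 2 * q2 + b'" using f(1,3)[OF R3] by (simp_all add: ev ce)
    show "p2 = 2 * a" "q2 = (3*b - b')/2" using R3c a' by algebra+
    have R4c: "-3*a' = -3 * pm - 3 * a" "-3*b' = -2 * qm - b" using f(7,9)[OF R4] by (simp_all add: ev ce)
    show "pm = -2 * a" "qm = (3*b' - b)/2" using R4c a' by algebra+
  qed
  have K: "al Ed = a" "gm eps Ed = 0" "cc1 Ed = (b + b')/2" "cc2 Ed = (b - b')/2" "cc3 eps Ed = s - a/2"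
    by (simp_all add: al_def gm_def cc1_def cc2_def cc3_def a_def b_def b'_def s_def te ce)
  have G: "G0 eps Ed (bvec i) = smult ((b + b')/2) (D1b i) + smult ((b - b')/2) (D2b i) + smult (s - a/2) (D3b i)
     + smult (-a) (bb eps (L 0) i)" for i
    by (simp add: G0_def aa0_def D1_def D2_def D3_def K br_add_left br_smult_left)
  show "Ed (bvec (L 1)) = G0 eps Ed (bvec (L 1))"
    unfolding G e1 by (auto simp: fun_eq_iff ev C ce te field_simps)
  show "Ed (bvec (L (-1))) = G0 eps Ed (bvec (L (-1)))"
    unfolding G em1 by (auto simp: fun_eq_iff ev C ce te field_simps)
  show "Ed (bvec (L 2)) = G0 eps Ed (bvec (L 2))"
    unfolding G e2 by (auto simp: fun_eq_iff ev C ce te field_simps)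
  show "Ed (bvec (L (-2))) = G0 eps Ed (bvec (L (-2)))"
    unfolding G em2 by (auto simp: fun_eq_iff ev C ce te field_simps)
  show "Ed (bvec (Y 0)) = G0 eps Ed (bvec (Y 0))"
    unfolding G eY0 by (auto simp: fun_eq_iff ev C ce te field_simps)
qed



lemma generate:
  assumes ce: "complex_of_real eps = of_int (two_eps eps) / 2"
    and te01: "two_eps eps = 0 \<or> two_eps eps = 1"
    and cl: "\<And>i j k c. P i \<Longrightarrow> P j \<Longrightarrow> bb eps i j = smult c (bvec k) \<Longrightarrow> c \<noteq> 0 \<Longrightarrow> P k"
    and g: "P (L 1)" "P (L (-1))" "P (L 2)" "P (L (-2))" "P (Y 0)"
  shows "P i"
proof -
  define te where "te = two_eps eps"
  have clL: "P (L (m + n))" if "P (L m)" "P (L n)" "m \<noteq> n" for m n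
    by (rule cl[OF that(1,2), of "of_int (m - n)"]) (use that(3) in simp_all)
  have clY: "P (Y (m + n))" if "P (L m)" "P (Y n)" "m - 2 * n - te \<noteq> 0" for m n
  proof (rule cl[OF that(1,2), of "of_int (m - 2 * n - te) / 2"])
    show "bb eps (L m) (Y n) = smult (of_int (m - 2 * n - te) / 2) (bvec (Y (m + n)))"
      by (simp add: ce te_def field_simps)
    have "(of_int (m - 2 * n - te) :: complex) \<noteq> 0" using that(3) by (metis of_int_eq_0_iff)
    thus "(of_int (m - 2 * n - te) / 2 :: complex) \<noteq> 0" by (metis divide_eq_0_iff zero_neq_numeral)
  qed
  have clM: "P (M (m + n + te))" if "P (Y m)" "P (Y n)" "m \<noteq> n" for m n
    by (rule cl[OF that(1,2), of "of_int (m - n)"]) (use that(3) in \<open>simp_all add: te_def\<close>)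
  have L0: "P (L 0)" using clL[OF g(1,2)] by simp
  have Lup: "P (L n)" if "n \<ge> 2" for n
    using that
  proof (induction n rule: int_ge_induct)
    case base then show ?case using g(3) by simp
  next
    case (step i) then show ?case using clL[OF step(2) g(1)] by simp
  qed
  have Ldn: "P (L n)" if "n \<le> -2" for n
    using that
  proof (induction n rule: int_le_induct)
    case base then show ?case using g(4) by simp
  next
    case (step i) then show ?case using clL[OF step(2) g(2)] by simp
  qed
  have Lall: "P (L n)" for n
  proof -
    have "n \<ge> 2 \<or> n \<le> -2 \<or> n = 1 \<or> n = -1 \<or> n = 0" by arith
    thus ?thesis using Lup Ldn g L0 by auto
  qed
  have Yall: "P (Y n)" for n
  proof (cases "te = 0")
    case True
    have up: "P (Y n)" if "n \<ge> 0" for n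
      using that
    proof (induction n rule: int_ge_induct)
      case base then show ?case using g(5) by simp
    next
      case (step i)
      have "2 * i \<noteq> 1" by presburger
      then show ?case using clY[OF Lall step(2), of 1] True by (simp add: add.commute)
    qed
    have dn: "P (Y n)" if "n \<le> 0" for n
      using that
    proof (induction n rule: int_le_induct)
      case base then show ?case using g(5) by simp
    next
      case (step i)
      have "-1 \<noteq> 2 * i" by presburger
      then show ?case using clY[OF Lall step(2), of "-1"] True by simp
    qed
    show ?thesis using up dn by (cases "n \<ge> 0") auto
  next
    case False
    hence te1: "te = 1" using te01 te_def by auto
    have Ym1: "P (Y (-1))" using clY[OF Lall g(5), of "-1"] te1 by simp
    have Y1: "P (Y 1)" using clY[OF Lall Ym1, of 2] te1 by simp
    have Ym2: "P (Y (-2))" using clY[OF Lall g(5), of "-2"] te1 by simp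
    have up: "P (Y n)" if "n \<ge> 1" for n
      using that
    proof (induction n rule: int_ge_induct)
      case base then show ?case using Y1 by simp
    next
      case (step i) then show ?case using clY[OF Lall step(2), of 1] te1 by (simp add: add.commute)
    qed
    have dn: "P (Y n)" if "n \<le> -2" for n
      using that
    proof (induction n rule: int_le_induct)
      case base then show ?case using Ym2 by simp
    next
      case (step i) then show ?case using clY[OF Lall step(2), of "-1"] te1 by simp
    qed
    have "n \<ge> 1 \<or> n \<le> -2 \<or> n = 0 \<or> n = -1" by arith
    thus ?thesis using up dn g(5) Ym1 by auto
  qed
  have Mall: "P (M k)" for k
  proof (cases "k = te")
    case True
    thus ?thesis using clM[OF Yall Yall, of 1 "-1"] by simp
  next
    case False
    thus ?thesis using clM[OF Yall Yall, of "k - te" 0] by simp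
  qed
  show ?thesis using Lall Yall Mall by (cases i) auto
qed



definition "Edr eps D = (\<lambda>u. D u - br eps (Aop eps (D (bvec (L 0)))) u)"

lemma der_G0:
  assumes ce: "complex_of_real eps = of_int (two_eps eps) / 2"
  shows "der eps (G0 eps Ed)"
proof -
  have "der eps (\<lambda>u. smult (cc1 Ed) (D1 u) + smult (cc2 Ed) (D2 u) + smult (cc3 eps Ed) (D3 u)
   + br eps (aa0 eps Ed) u)"
    by (intro der_add der_smult der_D1 der_D2 der_D3 der_br ce) (simp add: aa0_def)
  thus ?thesis unfolding G0_def[abs_def] .
qed

lemma classify:
  assumes eps01: "eps = 0 \<or> eps = 1/2"
    and lm: "lin_map D"
    and lb: "\<And>u v. u \<in> SV \<Longrightarrow> v \<in> SV \<Longrightarrow> D (br eps u v) = br eps (D u) v + br eps u (D v)"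
    and u: "u \<in> SV"
  shows "D u = smult (cc1 (Edr eps D)) (D1 u) + smult (cc2 (Edr eps D)) (D2 u)
     + smult (cc3 eps (Edr eps D)) (D3 u)
     + br eps (aa0 eps (Edr eps D) + Aop eps (D (bvec (L 0)))) u"
proof -
  have te: "two_eps eps = 0 \<and> complex_of_real eps = 0 \<or> two_eps eps = 1 \<and> complex_of_real eps = 1/2"
  proof (cases "eps = 0")
    case True thus ?thesis by (simp add: two_eps_def)
  next
    case False
    hence e: "eps = 1/2" using eps01 by auto
    have "two_eps eps = 1" unfolding e two_eps_def by simp
    moreover have "complex_of_real eps = 1/2" unfolding e by simp
    ultimately show ?thesis by simp
  qed
  have ce: "complex_of_real eps = of_int (two_eps eps) / 2" using te by auto
  define A where "A = Aop eps (D (bvec (L 0)))"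
  have AS: "A \<in> SV" using lm by (simp add: A_def lin_map_def)
  define Ed where "Ed = Edr eps D"
  have Ed_eq: "Ed = (\<lambda>u. D u - br eps A u)" by (simp add: Ed_def Edr_def A_def)
  have derD: "der eps D" using lm lb by (simp add: der_def)
  have derEd: "der eps Ed"
  proof (rule der_cong)
    show "der eps (\<lambda>u. D u + smult (-1) (br eps A u))"
      by (intro der_add der_smult derD der_br ce AS)
    fix u :: sv_vec
    show "D u + smult (- 1) (br eps A u) = Ed u"
      by (simp add: Ed_eq fun_eq_iff smult_apply plus_fun_apply)
  qed
  have lmEd: "lin_map Ed" and lbEd: "\<And>u v. u \<in> SV \<Longrightarrow> v \<in> SV \<Longrightarrow> Ed (br eps u v) = br eps (Ed u) v + br eps u (Ed v)"
    using derEd by (auto simp: der_def)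
  have hom: "Ed (bvec j) k = 0" if "deg2 eps k \<noteq> deg2 eps j" for j k
  proof -
    have "Ed (bvec j) k = D (bvec j) k - br eps A (bvec j) k" unfolding Ed_eq by simp
    also have "\<dots> = 0"
    proof -
      have dl: "D (bvec j) k - br eps A (bvec j) k = (if deg2 eps k = deg2 eps j then D (bvec j) k else 0)"
        unfolding A_def by (rule degree_lemma[OF ce lm lb])
      from that have "(deg2 eps k = deg2 eps j) = False" by simp
      from dl[unfolded this if_False] show ?thesis .
    qed
    finally show ?thesis .
  qed
  have gens: "Ed (bvec (L 1)) = G0 eps Ed (bvec (L 1)) \<and>
    Ed (bvec (L (-1))) = G0 eps Ed (bvec (L (-1))) \<and>
    Ed (bvec (L 2)) = G0 eps Ed (bvec (L 2)) \<and>
    Ed (bvec (L (-2))) = G0 eps Ed (bvec (L (-2))) \<and>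
    Ed (bvec (Y 0)) = G0 eps Ed (bvec (Y 0))"
  proof (cases "two_eps eps = 0")
    case True
    hence c: "two_eps eps = 0" "complex_of_real eps = 0" using te by auto
    show ?thesis using core0[OF c lmEd lbEd hom] by (intro conjI)
  next
    case False
    hence c: "two_eps eps = 1" "complex_of_real eps = 1/2" using te by auto
    show ?thesis using core1[OF c lmEd lbEd hom] by (intro conjI)
  qed
  have derG: "der eps (G0 eps Ed)" by (rule der_G0[OF ce])
  have lmG: "lin_map (G0 eps Ed)" using derG by (simp add: der_def)
  have all: "Ed (bvec i) = G0 eps Ed (bvec i)" for i
  proof (rule generate[OF ce])
    show "two_eps eps = 0 \<or> two_eps eps = 1" using te by auto
  next
    fix i j k c
    assume Pi: "Ed (bvec i) = G0 eps Ed (bvec i)" and Pj: "Ed (bvec j) = G0 eps Ed (bvec j)"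
      and bbe: "bb eps i j = smult c (bvec k)" and c: "c \<noteq> 0"
    have gl: "G0 eps Ed (bb eps i j) = br eps (G0 eps Ed (bvec i)) (bvec j) + br eps (bvec i) (G0 eps Ed (bvec j))"
      using derG unfolding der_def by (metis SV_bvec br_bvec)
    have el: "Ed (bb eps i j) = br eps (Ed (bvec i)) (bvec j) + br eps (bvec i) (Ed (bvec j))"
      using lbEd[of "bvec i" "bvec j"] by simp
    have "Ed (bb eps i j) = G0 eps Ed (bb eps i j)"
      unfolding el gl Pi[symmetric] Pj[symmetric] ..
    hence "smult c (Ed (bvec k)) = smult c (G0 eps Ed (bvec k))"
      using lmEd lmG unfolding bbe by (simp add: lin_map_def)
    thus "Ed (bvec k) = G0 eps Ed (bvec k)"
      using c by (auto simp: fun_eq_iff smult_apply)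
  qed (use gens in simp_all)
  have "Ed u = G0 eps Ed u"
    by (rule addhom_eq[OF lin_map_addhom[OF lmEd] lin_map_addhom[OF lmG] all u])
  moreover have "Ed u = D u - br eps A u" by (simp add: Ed_eq)
  ultimately have "D u = G0 eps Ed u + br eps A u"
    by (metis diff_add_cancel)
  thus ?thesis
    by (simp add: G0_def Ed_def[symmetric] A_def[symmetric] br_add_left u AS aa0_def add.assoc)
qed



lemma Aop_add: "Aop eps (d1 + d2) = Aop eps d1 + Aop eps d2"
  by (simp add: Aop_def fun_eq_iff plus_fun_apply add_divide_distrib distrib_left)
lemma Aop_smult: "Aop eps (smult c d) = smult c (Aop eps d)"
  by (simp add: Aop_def fun_eq_iff smult_apply)

definition "linF F \<longleftrightarrow> (\<forall>x\<in>SV. \<forall>v\<in>SV. F x v \<in> SV) \<and>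
   (\<forall>v\<in>SV. \<forall>x1\<in>SV. \<forall>x2\<in>SV. F (x1 + x2) v = F x1 v + F x2 v) \<and>
   (\<forall>v\<in>SV. \<forall>c. \<forall>x\<in>SV. F (smult c x) v = smult c (F x v))"

lemma Edr_add:
  assumes "linF F" "x1 \<in> SV" "x2 \<in> SV"
  shows "Edr eps (F (x1 + x2)) (bvec i) = Edr eps (F x1) (bvec i) + Edr eps (F x2) (bvec i)"
proof -
  have S: "F x1 (bvec (L 0)) \<in> SV" "F x2 (bvec (L 0)) \<in> SV" using assms by (auto simp: linF_def)
  have "F (x1 + x2) (bvec (L 0)) = F x1 (bvec (L 0)) + F x2 (bvec (L 0))"
    "F (x1 + x2) (bvec i) = F x1 (bvec i) + F x2 (bvec i)" using assms by (auto simp: linF_def)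
  thus ?thesis using S
    by (simp add: Edr_def Aop_add br_add_left)
qed

lemma Edr_smult:
  assumes "linF F" "x \<in> SV"
  shows "Edr eps (F (smult c x)) (bvec i) = smult c (Edr eps (F x) (bvec i))"
proof -
  have S: "F x (bvec (L 0)) \<in> SV" using assms by (auto simp: linF_def)
  have "F (smult c x) (bvec (L 0)) = smult c (F x (bvec (L 0)))"
    "F (smult c x) (bvec i) = smult c (F x (bvec i))" using assms by (auto simp: linF_def)
  hence "Edr eps (F (smult c x)) (bvec i) = smult c (F x (bvec i)) - smult c (br eps (Aop eps (F x (bvec (L 0)))) (bvec i))"
    using S by (simp add: Edr_def Aop_smult br_smult_left)
  thus ?thesis by (simp add: Edr_def fun_eq_iff smult_apply right_diff_distrib)
qed

lemma linF_lin:
  assumes lf: "linF F"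
  shows "lin_fun (\<lambda>x. cc1 (Edr eps (F x)))" "lin_fun (\<lambda>x. cc2 (Edr eps (F x)))"
    "lin_fun (\<lambda>x. cc3 eps (Edr eps (F x)))"
    "lin_map (\<lambda>x. aa0 eps (Edr eps (F x)) + Aop eps (F x (bvec (L 0))))"
proof -
  note ea = Edr_add[OF lf] and es = Edr_smult[OF lf]
  show "lin_fun (\<lambda>x. cc1 (Edr eps (F x)))"
    unfolding lin_fun_def cc1_def by (simp add: ea es plus_fun_apply smult_apply field_simps)
  show "lin_fun (\<lambda>x. cc2 (Edr eps (F x)))"
    unfolding lin_fun_def cc2_def by (simp add: ea es plus_fun_apply smult_apply field_simps)
  show "lin_fun (\<lambda>x. cc3 eps (Edr eps (F x)))"
    unfolding lin_fun_def cc3_def al_def by (simp add: ea es plus_fun_apply smult_apply field_simps)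
  have FS: "\<And>x v. x \<in> SV \<Longrightarrow> v \<in> SV \<Longrightarrow> F x v \<in> SV" using lf by (simp add: linF_def)
  have Fa: "\<And>x1 x2 v. x1 \<in> SV \<Longrightarrow> x2 \<in> SV \<Longrightarrow> v \<in> SV \<Longrightarrow> F (x1 + x2) v = F x1 v + F x2 v"
    using lf by (simp add: linF_def)
  have Fs: "\<And>x c v. x \<in> SV \<Longrightarrow> v \<in> SV \<Longrightarrow> F (smult c x) v = smult c (F x v)"
    using lf by (simp add: linF_def)
  show "lin_map (\<lambda>x. aa0 eps (Edr eps (F x)) + Aop eps (F x (bvec (L 0))))"
    unfolding lin_map_def
  proof (intro conjI ballI allI)
    fix x assume "x \<in> SV"
    thus "aa0 eps (Edr eps (F x)) + Aop eps (F x (bvec (L 0))) \<in> SV"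
      by (simp add: aa0_def FS)
  next
    fix x1 x2 assume x: "x1 \<in> SV" "x2 \<in> SV"
    show "aa0 eps (Edr eps (F (x1 + x2))) + Aop eps (F (x1 + x2) (bvec (L 0))) =
       aa0 eps (Edr eps (F x1)) + Aop eps (F x1 (bvec (L 0))) +
       (aa0 eps (Edr eps (F x2)) + Aop eps (F x2 (bvec (L 0))))"
      by (simp add: aa0_def al_def gm_def ea[OF x] Fa[OF x] Aop_add fun_eq_iff plus_fun_apply smult_apply algebra_simps)
  next
    fix c x assume x: "x \<in> SV"
    show "aa0 eps (Edr eps (F (smult c x))) + Aop eps (F (smult c x) (bvec (L 0))) =
       smult c (aa0 eps (Edr eps (F x)) + Aop eps (F x (bvec (L 0))))"
      by (simp add: aa0_def al_def gm_def es[OF x] Fs[OF x] Aop_smult fun_eq_iff plus_fun_apply smult_apply algebra_simps)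
  qed
qed

lemma bb_antisym: "bb eps j i = smult (-1) (bb eps i j)"
  by (cases i; cases j) (simp_all add: fun_eq_iff smult_apply zero_fun_apply add.commute)

lemma br_antisym:
  assumes "u \<in> SV" "v \<in> SV"
  shows "br eps v u = smult (-1) (br eps u v)"
proof -
  have "br eps v u = (\<Sum>j\<in>supp v. \<Sum>i\<in>supp u. smult (v j * u i) (bb eps j i))" unfolding br_def ..
  also have "\<dots> = (\<Sum>i\<in>supp u. \<Sum>j\<in>supp v. smult (v j * u i) (bb eps j i))" by (rule sum.swap)
  also have "\<dots> = (\<Sum>i\<in>supp u. \<Sum>j\<in>supp v. smult (-1) (smult (u i * v j) (bb eps i j)))"
  proof (intro sum.cong refl)
    fix i j
    show "smult (v j * u i) (bb eps j i) = smult (-1) (smult (u i * v j) (bb eps i j))"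
      by (subst bb_antisym) (simp add: mult.commute)
  qed
  also have "\<dots> = smult (-1) (br eps u v)"
    by (simp only: br_def smult_sum)
  finally show ?thesis .
qed

theorem lemma3p1:
  fixes eps :: real and f :: "sv_vec \<Rightarrow> sv_vec \<Rightarrow> sv_vec"
  assumes "eps = 0 \<or> eps = 1/2"
    and "biderivation eps f"
  shows "\<exists>\<phi> \<psi> \<rho>1 \<rho>2 \<rho>3 \<theta>1 \<theta>2 \<theta>3.
           lin_map \<phi> \<and> lin_map \<psi> \<and>
           lin_fun \<rho>1 \<and> lin_fun \<rho>2 \<and> lin_fun \<rho>3 \<and>
           lin_fun \<theta>1 \<and> lin_fun \<theta>2 \<and> lin_fun \<theta>3 \<and>
           (\<forall>x\<in>SV. \<forall>y\<in>SV.
              f x y = smult (\<rho>1 x) (D1 y) + smult (\<rho>2 x) (D2 y) + smult (\<rho>3 x) (D3 y)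
                      + br eps (\<phi> x) y \<and>
              f x y = smult (\<theta>1 y) (D1 x) + smult (\<theta>2 y) (D2 x) + smult (\<theta>3 y) (D3 x)
                      + br eps x (\<psi> y))"
proof -
  note bd = assms(2)[unfolded biderivation_def]
  have fS: "\<And>x y. x \<in> SV \<Longrightarrow> y \<in> SV \<Longrightarrow> f x y \<in> SV" using bd by blast
  have lm1: "\<And>z. z \<in> SV \<Longrightarrow> lin_map (\<lambda>x. f x z)" using bd by blast
  have lm2: "\<And>x. x \<in> SV \<Longrightarrow> lin_map (\<lambda>y. f x y)" using bd by blast
  have lb1: "\<And>x y z. x \<in> SV \<Longrightarrow> y \<in> SV \<Longrightarrow> z \<in> SV \<Longrightarrow> f (br eps x y) z = br eps x (f y z) + br eps (f x z) y"
    using bd by blast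
  have lb2: "\<And>x y z. x \<in> SV \<Longrightarrow> y \<in> SV \<Longrightarrow> z \<in> SV \<Longrightarrow> f x (br eps y z) = br eps (f x y) z + br eps y (f x z)"
    using bd by blast
  define F1 where "F1 = (\<lambda>x. f x)"
  define F2 where "F2 = (\<lambda>y x. f x y)"
  have lf1: "linF F1" using fS lm1 unfolding linF_def F1_def lin_map_def by auto
  have lf2: "linF F2" using fS lm2 unfolding linF_def F2_def lin_map_def by auto
  define phi where "phi = (\<lambda>x. aa0 eps (Edr eps (F1 x)) + Aop eps (F1 x (bvec (L 0))))"
  define phi2 where "phi2 = (\<lambda>y. aa0 eps (Edr eps (F2 y)) + Aop eps (F2 y (bvec (L 0))))"
  define psi where "psi = (\<lambda>y. smult (-1) (phi2 y))"
  have lphi: "lin_map phi" unfolding phi_def by (rule linF_lin(4)[OF lf1])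
  have lphi2: "lin_map phi2" unfolding phi2_def by (rule linF_lin(4)[OF lf2])
  have lpsi: "lin_map psi" using lphi2 unfolding psi_def lin_map_def by (simp add: smult_add ac_simps)
  have eq1: "f x y = smult (cc1 (Edr eps (F1 x))) (D1 y) + smult (cc2 (Edr eps (F1 x))) (D2 y)
      + smult (cc3 eps (Edr eps (F1 x))) (D3 y) + br eps (phi x) y" if "x \<in> SV" "y \<in> SV" for x y
    unfolding phi_def F1_def
  proof (rule classify[OF assms(1), of "f x" y])
    show "lin_map (f x)" using lm2[OF that(1)] by simp
    show "\<And>u v. u \<in> SV \<Longrightarrow> v \<in> SV \<Longrightarrow> f x (br eps u v) = br eps (f x u) v + br eps u (f x v)"
      using lb2 that by blast
  qed (use that in auto)
  have eq2: "f x y = smult (cc1 (Edr eps (F2 y))) (D1 x) + smult (cc2 (Edr eps (F2 y))) (D2 x)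
      + smult (cc3 eps (Edr eps (F2 y))) (D3 x) + br eps x (psi y)" if "x \<in> SV" "y \<in> SV" for x y
  proof -
    have "F2 y x = smult (cc1 (Edr eps (F2 y))) (D1 x) + smult (cc2 (Edr eps (F2 y))) (D2 x)
      + smult (cc3 eps (Edr eps (F2 y))) (D3 x) + br eps (phi2 y) x"
      unfolding phi2_def
    proof (rule classify[OF assms(1), of "F2 y" x])
      show "lin_map (F2 y)" using lm1[OF that(2)] by (simp add: F2_def)
      show "\<And>u v. u \<in> SV \<Longrightarrow> v \<in> SV \<Longrightarrow> F2 y (br eps u v) = br eps (F2 y u) v + br eps u (F2 y v)"
        using lb1 that by (simp add: F2_def add.commute)
    qed (use that in auto)
    moreover have "br eps (phi2 y) x = br eps x (psi y)"
    proof -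
      have p2S: "phi2 y \<in> SV" using lphi2 that by (simp add: lin_map_def)
      show ?thesis unfolding psi_def using br_antisym[OF that(1) p2S] by (simp add: br_smult_right that p2S)
    qed
    ultimately show ?thesis by (simp add: F2_def)
  qed
  show ?thesis
    apply (rule exI[of _ phi], rule exI[of _ psi])
    apply (rule exI[of _ "\<lambda>x. cc1 (Edr eps (F1 x))"], rule exI[of _ "\<lambda>x. cc2 (Edr eps (F1 x))"],
           rule exI[of _ "\<lambda>x. cc3 eps (Edr eps (F1 x))"])
    apply (rule exI[of _ "\<lambda>x. cc1 (Edr eps (F2 x))"], rule exI[of _ "\<lambda>x. cc2 (Edr eps (F2 x))"],
           rule exI[of _ "\<lambda>x. cc3 eps (Edr eps (F2 x))"])
    using lphi lpsi linF_lin[OF lf1] linF_lin[OF lf2] eq1 eq2 by blast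
qed

end
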